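(* Let $\Pi\subseteq A=\Delta^4\times\Delta^{n-1}$ be the $4$-permutohedron point set defined in the context. For every triangulation $\mathscr T$ of $\Pi$ there is a triangulation $\mathscr T'$ of $A$ with $\mathscr T\subseteq\mathscr T'$.
   Context: For a finite point set $A\subset\mathbb R^d$: a cell is a subset of $A$; a simplex is an affinely independent cell; a face of a cell $C$ is a subset $F\subseteq C$ which is the set of minimizers on $C$ of some linear functional. A triangulation of $A$ is a collection $\mathscr T$ of simplices of $A$, closed under taking faces, such that for all $\sigma,\sigma'\in\mathscr T$, $\mathrm{conv}(\sigma)\cap\mathrm{conv}(\sigma')=\mathrm{conv}(F)$ for a common face $F$ of $\sigma$ and $\sigma'$, and such that $\bigcup_{\sigma\in\mathscr T}\mathrm{conv}(\sigma)=\mathrm{conv}(A)$. Setting. $\Gamma_5^2$ is the set of unordered pairs $(ij)=(ji)$ of distinct elements of $[5]$. For each $\alpha\in\Gamma_5^2$ let $\Delta_\alpha$ be a finite set, the sets being pairwise disjoint, and let $\Delta^{n-1}:=\bigcup_\alpha\Delta_\alpha$ be the standard basis of $\mathbb R^n$. Let $e_1,\dots,e_5$ be the standard basis of $\mathbb R^5$ and $A:=\Delta^4\times\Delta^{n-1}=\{(e_i,f):i\in[5],f\in\Delta^{n-1}\}$. Define $\Pi:=\bigcup_{(ij)\in\Gamma_5^2}\bigcup_{f\in\Delta_{(ij)}}\{(e_i,f),(e_j,f)\}\subseteq A$. *)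

theory Defs
  imports "HOL-Analysis.Analysis" "HOL-Library.Numeral_Type"
begin

definition is_face :: "'a::real_vector set \<Rightarrow> 'a set \<Rightarrow> bool" where
  "is_face C F \<longleftrightarrow> F = {} \<or>
     (\<exists>\<phi>::'a \<Rightarrow> real. linear \<phi> \<and> F = {x \<in> C. \<forall>y\<in>C. \<phi> x \<le> \<phi> y})"

definition is_simplex_of :: "'a::real_vector set \<Rightarrow> 'a set \<Rightarrow> bool" where
  "is_simplex_of A \<sigma> \<longleftrightarrow> \<sigma> \<subseteq> A \<and> \<not> affine_dependent \<sigma>"

definition triangulation :: "'a::real_vector set \<Rightarrow> 'a set set \<Rightarrow> bool" where
  "triangulation A T \<longleftrightarrow>
     (\<forall>\<sigma>\<in>T. is_simplex_of A \<sigma>) \<and>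
     (\<forall>\<sigma>\<in>T. \<forall>F. is_face \<sigma> F \<longrightarrow> F \<in> T) \<and>
     (\<forall>\<sigma>\<in>T. \<forall>\<sigma>'\<in>T. \<exists>F. is_face \<sigma> F \<and> is_face \<sigma>' F \<and>
         convex hull \<sigma> \<inter> convex hull \<sigma>' = convex hull F) \<and>
     (\<Union>\<sigma>\<in>T. convex hull \<sigma>) = convex hull A"

text \<open>The product of simplices \<Delta>^4 \<times> \<Delta>^{n-1}, with the basis of R^n indexed by the finite type 'n.\<close>
definition prodA :: "((real^5) \<times> (real^('n::finite))) set" where
  "prodA = {(axis i 1, axis f 1) | i f. True}"

text \<open>The permutohedron point set: lab f is the pair (ij) with f \<in> \<Delta>_(ij).\<close>
definition perm_Pi :: "('n::finite \<Rightarrow> 5 set) \<Rightarrow> ((real^5) \<times> (real^'n)) set" where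
  "perm_Pi lab = {(axis i 1, axis f 1) | i f. i \<in> lab f}"

end

theory Submission
  imports Defs
begin


lemma face_subset: "is_face \<sigma> F \<Longrightarrow> F \<subseteq> \<sigma>"
  unfolding is_face_def by auto

lemma subset_face:
  fixes \<sigma> :: "'a::euclidean_space set"
  assumes ind: "\<not> affine_dependent \<sigma>" and sub: "F \<subseteq> \<sigma>"
  shows "is_face \<sigma> F"
proof (cases "F = {}")
  case True thus ?thesis by (simp add: is_face_def)
next
  case False
  then obtain a where aF: "a \<in> F" by blast
  have a\<sigma>: "a \<in> \<sigma>" using aF sub by blast
  have "\<not> dependent ((\<lambda>x. -a + x) ` (\<sigma> - {a}))"
    using ind affine_dependent_iff_dependent[of a "\<sigma> - {a}"] a\<sigma> by (simp add: insert_absorb)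
  then obtain g :: "'a \<Rightarrow> real" where g: "linear g"
    and gv: "\<forall>x\<in>(\<lambda>x. -a + x) ` (\<sigma> - {a}). g x = (if x + a \<in> F then 0 else 1)"
    using linear_independent_extend[of "(\<lambda>x. -a + x) ` (\<sigma> - {a})" "\<lambda>x. if x + a \<in> F then 0 else (1::real)"]
    by blast
  have val: "g v = g a + (if v \<in> F then 0 else 1)" if "v \<in> \<sigma>" for v
  proof (cases "v = a")
    case True then show ?thesis using aF by simp
  next
    case False
    then have "g (-a + v) = (if v \<in> F then 0 else 1)" using gv that by auto
    moreover have "g (-a + v) = - g a + g v" using g by (simp add: linear_diff)
    ultimately show ?thesis by simp
  qed
  have "F = {x \<in> \<sigma>. \<forall>y\<in>\<sigma>. g x \<le> g y}"
  proof (intro set_eqI iffI)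
    fix x assume xF: "x \<in> F"
    then have x\<sigma>: "x \<in> \<sigma>" using sub by blast
    have "g x \<le> g y" if "y \<in> \<sigma>" for y
      using val[OF x\<sigma>] val[OF that] xF by simp
    then show "x \<in> {x \<in> \<sigma>. \<forall>y\<in>\<sigma>. g x \<le> g y}" using x\<sigma> by blast
  next
    fix x assume x: "x \<in> {x \<in> \<sigma>. \<forall>y\<in>\<sigma>. g x \<le> g y}"
    then have "g x \<le> g a" using a\<sigma> by auto
    moreover have "x \<in> \<sigma>" using x by blast
    ultimately show "x \<in> F" using val[of x] val[OF a\<sigma>] aF by (cases "x \<in> F") simp_all
  qed
  then show ?thesis unfolding is_face_def using g by blast
qed

lemma face_empty_iff: "is_face {} F \<longleftrightarrow> F = {}"
  unfolding is_face_def by auto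

lemma tri_insert_empty:
  assumes "triangulation B T"
  shows "triangulation B (insert {} T)"
proof -
  note d = assms[unfolded triangulation_def]
  have 1: "\<forall>\<sigma>\<in>insert {} T. is_simplex_of B \<sigma>"
    using d by (simp add: is_simplex_of_def)
  have 2: "\<forall>\<sigma>\<in>insert {} T. \<forall>F. is_face \<sigma> F \<longrightarrow> F \<in> insert {} T"
    using d by (simp add: face_empty_iff)
  have e: "is_face S {}" for S :: "'a set" by (simp add: is_face_def)
  have 3: "\<forall>\<sigma>\<in>insert {} T. \<forall>\<sigma>'\<in>insert {} T. \<exists>F. is_face \<sigma> F \<and> is_face \<sigma>' F \<and>
         convex hull \<sigma> \<inter> convex hull \<sigma>' = convex hull F"
  proof (intro ballI)
    fix \<sigma> \<sigma>' assume a: "\<sigma> \<in> insert {} T" "\<sigma>' \<in> insert {} T"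
    show "\<exists>F. is_face \<sigma> F \<and> is_face \<sigma>' F \<and> convex hull \<sigma> \<inter> convex hull \<sigma>' = convex hull F"
    proof (cases "\<sigma> = {} \<or> \<sigma>' = {}")
      case True then show ?thesis using e[of \<sigma>] e[of \<sigma>'] by (intro exI[of _ "{}"]) auto
    next
      case False then show ?thesis using a d by auto
    qed
  qed
  have 4: "(\<Union>\<sigma>\<in>insert {} T. convex hull \<sigma>) = convex hull B" using d by simp
  show ?thesis unfolding triangulation_def using 1 2 3 4 by blast
qed

lemma tri_simp: "triangulation B T \<Longrightarrow> \<sigma> \<in> T \<Longrightarrow> \<sigma> \<subseteq> B \<and> \<not> affine_dependent \<sigma>"
  unfolding triangulation_def is_simplex_of_def by blast

lemma tri_face:
  fixes B :: "'a::euclidean_space set"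
  assumes "triangulation B T" "\<sigma> \<in> T" "F \<subseteq> \<sigma>"
  shows "F \<in> T"
proof -
  have "is_face \<sigma> F" using subset_face assms(3) tri_simp[OF assms(1,2)] by blast
  moreover have "\<forall>\<sigma>\<in>T. \<forall>F. is_face \<sigma> F \<longrightarrow> F \<in> T" using assms(1) by (simp add: triangulation_def)
  ultimately show ?thesis using assms(2) by blast
qed

lemma tri_int:
  assumes "triangulation B T" "\<sigma> \<in> T" "\<sigma>' \<in> T"
  shows "\<exists>H. H \<subseteq> \<sigma> \<and> H \<subseteq> \<sigma>' \<and> convex hull \<sigma> \<inter> convex hull \<sigma>' = convex hull H"
proof -
  have "\<forall>\<sigma>\<in>T. \<forall>\<sigma>'\<in>T. \<exists>F. is_face \<sigma> F \<and> is_face \<sigma>' F \<and>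
         convex hull \<sigma> \<inter> convex hull \<sigma>' = convex hull F" using assms(1) by (simp add: triangulation_def)
  then obtain F where "is_face \<sigma> F" "is_face \<sigma>' F" "convex hull \<sigma> \<inter> convex hull \<sigma>' = convex hull F"
    using assms(2,3) by blast
  then show ?thesis using face_subset by blast
qed

lemma tri_int_face:
  assumes "triangulation B T" "\<sigma> \<in> T" "\<sigma>' \<in> T"
  shows "\<exists>F. is_face \<sigma> F \<and> is_face \<sigma>' F \<and> convex hull \<sigma> \<inter> convex hull \<sigma>' = convex hull F"
proof -
  have "\<forall>\<sigma>\<in>T. \<forall>\<sigma>'\<in>T. \<exists>F. is_face \<sigma> F \<and> is_face \<sigma>' F \<and>
         convex hull \<sigma> \<inter> convex hull \<sigma>' = convex hull F" using assms(1) by (simp add: triangulation_def)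
  then show ?thesis using assms(2,3) by blast
qed

lemma tri_un: "triangulation B T \<Longrightarrow> (\<Union>\<sigma>\<in>T. convex hull \<sigma>) = convex hull B"
  by (simp add: triangulation_def)




definition vis :: "'a::euclidean_space \<Rightarrow> 'a set \<Rightarrow> 'a set \<Rightarrow> bool" where
  "vis p B F \<longleftrightarrow> \<not> affine_dependent (insert p F) \<and>
     convex hull (insert p F) \<inter> convex hull B \<subseteq> convex hull F"

lemma vis_seg:
  fixes p :: "'a::euclidean_space"
  assumes v: "vis p B G" and pG: "p \<notin> G" and a: "a \<in> convex hull B" and b: "b \<in> convex hull G"
    and eq: "a = t *\<^sub>R p + (1-t) *\<^sub>R b" and t: "0 < t" "t \<le> 1"
  shows False
proof -
  have "a \<in> convex hull (insert p G)"
  proof -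
    have "p \<in> convex hull (insert p G)" by (simp add: hull_inc)
    moreover have "b \<in> convex hull (insert p G)" using b hull_mono[of G "insert p G"] by blast
    ultimately show ?thesis unfolding eq using t by (intro convexD) auto
  qed
  then have aG: "a \<in> convex hull G" using v a unfolding vis_def by blast
  have aff: "a \<in> affine hull G" "b \<in> affine hull G"
    using aG b convex_hull_subset_affine_hull by blast+
  have "p = (1/t) *\<^sub>R a + (1 - 1/t) *\<^sub>R b"
    using t unfolding eq by (simp add: algebra_simps)
  also have "\<dots> \<in> affine hull G"
    using aff by (intro mem_affine) auto
  finally have "p \<in> affine hull G" .
  then have "affine_dependent (insert p G)"
    unfolding affine_dependent_def using pG by (intro bexI[of _ p]) auto
  then show False using v unfolding vis_def by blast
qed




lemma relint_step:
  fixes F :: "'a::euclidean_space set"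
  assumes y0: "y0 \<in> rel_interior (convex hull F)" and q: "q \<in> affine hull F"
  shows "\<exists>\<epsilon>>0. \<epsilon> \<le> 1 \<and> (1-\<epsilon>) *\<^sub>R y0 + \<epsilon> *\<^sub>R q \<in> convex hull F"
proof -
  obtain e where e: "e > 0" "cball y0 e \<inter> affine hull F \<subseteq> convex hull F"
    using y0 unfolding mem_rel_interior_cball by auto
  define n where "n = norm (q - y0)"
  define \<epsilon> where "\<epsilon> = min 1 (e / (n + 1))"
  have n0: "n \<ge> 0" unfolding n_def by simp
  have \<epsilon>: "\<epsilon> > 0" "\<epsilon> \<le> 1" unfolding \<epsilon>_def using e n0 by auto
  have "\<epsilon> * n \<le> e"
  proof -
    have "\<epsilon> * n \<le> (e / (n+1)) * n" unfolding \<epsilon>_def using n0 by (intro mult_right_mono) auto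
    also have "\<dots> \<le> e" using e n0 by (simp add: divide_simps)
    finally show ?thesis .
  qed
  moreover have "dist y0 ((1-\<epsilon>) *\<^sub>R y0 + \<epsilon> *\<^sub>R q) = \<epsilon> * n"
  proof -
    have "y0 - ((1-\<epsilon>) *\<^sub>R y0 + \<epsilon> *\<^sub>R q) = \<epsilon> *\<^sub>R (y0 - q)" by (simp add: algebra_simps)
    then show ?thesis unfolding dist_norm n_def using \<epsilon> by (simp add: norm_minus_commute)
  qed
  ultimately have "(1-\<epsilon>) *\<^sub>R y0 + \<epsilon> *\<^sub>R q \<in> cball y0 e" by simp
  moreover have "y0 \<in> affine hull F"
    using y0 rel_interior_subset convex_hull_subset_affine_hull by blast
  then have "(1-\<epsilon>) *\<^sub>R y0 + \<epsilon> *\<^sub>R q \<in> affine hull F"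
    using q by (intro mem_affine) auto
  ultimately show ?thesis using e \<epsilon> by blast
qed

lemma cover:
  fixes B :: "'a::euclidean_space set"
  assumes fin: "finite B" and T: "triangulation B T" and e: "{} \<in> T"
    and p: "p \<notin> convex hull B" and x: "x \<in> convex hull (insert p B)"
  shows "\<exists>F\<in>T. x \<in> convex hull F \<or> (vis p B F \<and> x \<in> convex hull (insert p F))"
proof (cases "x \<in> convex hull B")
  case True
  then show ?thesis using tri_un[OF T] by blast
next
  case xn: False
  have Tsimp: "\<And>\<sigma>. \<sigma> \<in> T \<Longrightarrow> \<sigma> \<subseteq> B \<and> \<not> affine_dependent \<sigma>"
    using tri_simp[OF T] by blast
  have Tface: "\<And>\<sigma> F. \<sigma> \<in> T \<Longrightarrow> F \<subseteq> \<sigma> \<Longrightarrow> F \<in> T"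
    using tri_face[OF T] by blast
  have Tconv: "\<And>\<sigma>. \<sigma> \<in> T \<Longrightarrow> convex hull \<sigma> \<subseteq> convex hull B" using Tsimp hull_mono by blast
  show ?thesis
  proof (cases "B = {}")
    case True
    then have "x = p" using x by simp
    moreover have "vis p B {}" unfolding vis_def using True by simp
    ultimately show ?thesis using e by (intro bexI[of _ "{}"]) auto
  next
    case Bne: False
    obtain u v b where uv: "u \<ge> 0" "v \<ge> 0" "u + v = 1" and b: "b \<in> convex hull B"
      and xe: "x = u *\<^sub>R p + v *\<^sub>R b"
      using x convex_hull_insert[OF Bne, of p] by blast
    define g where "g = (\<lambda>s::real. (1-s) *\<^sub>R p + s *\<^sub>R b)"
    define S where "S = {0..1} \<inter> g -` (convex hull B)"
    have cB: "closed (convex hull B)"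
      using fin by (simp add: compact_imp_closed compact_convex_hull finite_imp_compact)
    have cl: "closed S" unfolding S_def g_def
      by (intro closed_Int closed_atLeastAtMost continuous_closed_vimage cB) (intro continuous_intros)
    have 1: "1 \<in> S" using b unfolding S_def g_def by simp
    have bdd: "bdd_below S" unfolding S_def by (rule bdd_belowI[of _ 0]) auto
    define s0 where "s0 = Inf S"
    have s0S: "s0 \<in> S" using closed_contains_Inf[of S] cl 1 bdd s0_def by blast
    have s0le: "\<And>s. s \<in> S \<Longrightarrow> s0 \<le> s" using cInf_lower bdd s0_def by blast
    define y0 where "y0 = g s0"
    have y0B: "y0 \<in> convex hull B" and s01: "0 \<le> s0" "s0 \<le> 1"
      using s0S unfolding S_def y0_def by auto
    have s0pos: "s0 > 0"
    proof (rule ccontr)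
      assume "\<not> s0 > 0"
      then have "s0 = 0" using s01 by simp
      then have "y0 = p" unfolding y0_def g_def by simp
      then show False using y0B p by simp
    qed
    have vs0: "v < s0"
    proof (rule ccontr)
      assume "\<not> v < s0"
      then have sv: "s0 \<le> v" by simp
      have "x \<in> convex hull B"
      proof (cases "s0 = 1")
        case True
        then have "v = 1" "u = 0" using sv uv by auto
        then show ?thesis using b xe by simp
      next
        case False
        then have s1: "s0 < 1" using s01 by simp
        define \<theta> where "\<theta> = (v - s0) / (1 - s0)"
        have th: "0 \<le> \<theta>" "\<theta> \<le> 1" unfolding \<theta>_def using s1 sv uv by (auto simp: divide_simps)
        have uE: "u = 1 - v" using uv by simp
        have tt: "\<theta>*(1-s0) = v - s0" unfolding \<theta>_def using s1 by simp
        have c1: "(1-\<theta>)*(1-s0) = u"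
        proof -
          have "(1-\<theta>)*(1-s0) = (1-s0) - \<theta>*(1-s0)" by (simp add: algebra_simps)
          then show ?thesis using tt uE by simp
        qed
        have c2: "(1-\<theta>)* s0 + \<theta> = v"
        proof -
          have "(1-\<theta>)* s0 + \<theta> = s0 + \<theta>*(1-s0)" by (simp add: algebra_simps)
          then show ?thesis using tt by simp
        qed
        have "(1-\<theta>) *\<^sub>R y0 + \<theta> *\<^sub>R b = ((1-\<theta>)*(1-s0)) *\<^sub>R p + ((1-\<theta>)* s0 + \<theta>) *\<^sub>R b"
          unfolding y0_def g_def by (rule euclidean_eqI) (simp add: inner_simps algebra_simps)
        also have "\<dots> = x" unfolding c1 c2 xe ..
        finally have "x = (1-\<theta>) *\<^sub>R y0 + \<theta> *\<^sub>R b" by simp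
        then show ?thesis using y0B b th by (simp add: convexD)
      qed
      then show False using xn by simp
    qed
    obtain \<sigma> where \<sigma>: "\<sigma> \<in> T" "y0 \<in> convex hull \<sigma>"
      using y0B tri_un[OF T] by blast
    have \<sigma>i: "\<not> affine_dependent \<sigma>" using Tsimp \<sigma> by blast
    have \<sigma>f: "finite \<sigma>" using aff_independent_finite \<sigma>i by blast
    obtain w where w: "\<forall>z\<in>\<sigma>. 0 \<le> w z" "sum w \<sigma> = 1" "(\<Sum>z\<in>\<sigma>. w z *\<^sub>R z) = y0"
      using \<sigma>(2) convex_hull_finite[OF \<sigma>f] by blast
    define F where "F = {z\<in>\<sigma>. 0 < w z}"
    have F\<sigma>: "F \<subseteq> \<sigma>" unfolding F_def by blast
    have FT: "F \<in> T" using Tface \<sigma>(1) F\<sigma> by blast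
    have Fi: "\<not> affine_dependent F" using \<sigma>i F\<sigma> affine_dependent_subset by blast
    have z0: "\<forall>i\<in>\<sigma> - F. w i = 0" using w(1) unfolding F_def by force
    have wF: "sum w F = 1" using w(2) sum.mono_neutral_right[OF \<sigma>f F\<sigma> z0] by simp
    have z0': "\<forall>i\<in>\<sigma> - F. w i *\<^sub>R i = 0" using z0 by simp
    have wF2: "(\<Sum>z\<in>F. w z *\<^sub>R z) = y0" using w(3) sum.mono_neutral_right[OF \<sigma>f F\<sigma> z0'] by simp
    have Fne: "F \<noteq> {}" using wF by auto
    have y0ri: "y0 \<in> rel_interior (convex hull F)"
      unfolding rel_interior_convex_hull_explicit[OF Fi] using wF wF2 unfolding F_def by blast
    have y0F: "y0 \<in> convex hull F" using y0ri rel_interior_subset by blast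
    have y0aff: "y0 \<in> affine hull F" using y0F convex_hull_subset_affine_hull by blast
    have FB: "convex hull F \<subseteq> convex hull B" using Tconv FT by blast
    have gS: "s < s0 \<Longrightarrow> 0 \<le> s \<Longrightarrow> g s \<notin> convex hull B" for s
      using s0le[of s] s01 unfolding S_def by auto
    have pF: "p \<notin> F" using p FB y0F hull_inc
      by (metis F\<sigma> Tsimp \<sigma>(1) hull_subset subset_iff)
    have indep: "\<not> affine_dependent (insert p F)"
    proof
      assume "affine_dependent (insert p F)"
      then have "p \<in> affine hull F" using affine_dependent_choose[OF Fi] by blast
      then obtain \<epsilon> where \<epsilon>: "\<epsilon> > 0" "\<epsilon> \<le> 1" "(1-\<epsilon>) *\<^sub>R y0 + \<epsilon> *\<^sub>R p \<in> convex hull F"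
        using relint_step[OF y0ri] by blast
      have "(1-\<epsilon>) *\<^sub>R y0 + \<epsilon> *\<^sub>R p = ((1-\<epsilon>)*(1-s0) + \<epsilon>) *\<^sub>R p + ((1-\<epsilon>)* s0) *\<^sub>R b"
        unfolding y0_def g_def by (rule euclidean_eqI) (simp add: inner_simps algebra_simps)
      also have "\<dots> = g ((1-\<epsilon>)* s0)" unfolding g_def by (rule euclidean_eqI) (simp add: inner_simps algebra_simps)
      finally have "g ((1-\<epsilon>)* s0) \<in> convex hull B" using \<epsilon>(3) FB by auto
      moreover have "(1-\<epsilon>)* s0 < s0" using \<epsilon> s0pos by simp
      moreover have "0 \<le> (1-\<epsilon>)* s0" using \<epsilon> s0pos by simp
      ultimately show False using gS by blast
    qed
    have hull: "convex hull (insert p F) \<inter> convex hull B \<subseteq> convex hull F"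
    proof
      fix y assume y: "y \<in> convex hull (insert p F) \<inter> convex hull B"
      then obtain \<alpha> \<beta> f where ab: "\<alpha> \<ge> 0" "\<beta> \<ge> 0" "\<alpha> + \<beta> = 1" and f: "f \<in> convex hull F"
        and ye: "y = \<alpha> *\<^sub>R p + \<beta> *\<^sub>R f"
        using convex_hull_insert[OF Fne, of p] by blast
      show "y \<in> convex hull F"
      proof (cases "\<alpha> = 0")
        case True then show ?thesis using ab f ye by simp
      next
        case False
        then have \<alpha>0: "\<alpha> > 0" using ab by simp
        define q where "q = 2 *\<^sub>R y0 + (-1) *\<^sub>R f"
        have "q \<in> affine hull F" unfolding q_def
          using y0aff f convex_hull_subset_affine_hull by (intro mem_affine) auto
        then obtain \<epsilon> where \<epsilon>: "\<epsilon> > 0" "\<epsilon> \<le> 1" "(1-\<epsilon>) *\<^sub>R y0 + \<epsilon> *\<^sub>R q \<in> convex hull F"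
          using relint_step[OF y0ri] by blast
        define z where "z = (1-\<epsilon>) *\<^sub>R y0 + \<epsilon> *\<^sub>R q"
        have zB: "z \<in> convex hull B" using \<epsilon>(3) FB z_def by auto
        define \<gamma> where "\<gamma> = \<epsilon> / (\<beta> + \<epsilon>)"
        have \<gamma>: "0 < \<gamma>" "\<gamma> \<le> 1" unfolding \<gamma>_def using \<epsilon> ab by (auto simp: divide_simps)
        define wv where "wv = (1-\<gamma>) *\<^sub>R z + \<gamma> *\<^sub>R y"
        have wB: "wv \<in> convex hull B" unfolding wv_def using zB y \<gamma> by (simp add: convexD)
        have "wv = (\<gamma>*\<alpha> + (1-\<gamma>)*(1+\<epsilon>)*(1-s0)) *\<^sub>R p + ((1-\<gamma>)*(1+\<epsilon>)* s0) *\<^sub>R b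
                  + (\<gamma>*\<beta> - (1-\<gamma>)*\<epsilon>) *\<^sub>R f"
          unfolding wv_def z_def q_def ye y0_def g_def by (rule euclidean_eqI) (simp add: inner_simps algebra_simps)
        moreover have "\<gamma>*\<beta> - (1-\<gamma>)*\<epsilon> = 0" unfolding \<gamma>_def using \<epsilon> ab by (simp add: field_simps)
        moreover have "(1-\<gamma>)*(1+\<epsilon>) = 1 - \<gamma>*\<alpha>"
        proof -
          have aE: "\<alpha> = 1 - \<beta>" using ab by simp
          have "\<beta> + \<epsilon> \<noteq> 0" using \<epsilon> ab by simp
          then show ?thesis unfolding \<gamma>_def aE by (simp add: field_simps)
        qed
        ultimately have "wv = (\<gamma>*\<alpha> + (1 - \<gamma>*\<alpha>)*(1-s0)) *\<^sub>R p + ((1 - \<gamma>*\<alpha>)* s0) *\<^sub>R b" by simp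
        also have "\<dots> = g ((1 - \<gamma>*\<alpha>)* s0)" unfolding g_def by (rule euclidean_eqI) (simp add: inner_simps algebra_simps)
        finally have "g ((1 - \<gamma>*\<alpha>)* s0) \<in> convex hull B" using wB by simp
        moreover have "(1 - \<gamma>*\<alpha>)* s0 < s0" using \<gamma> \<alpha>0 s0pos by simp
        moreover have "0 \<le> (1 - \<gamma>*\<alpha>)* s0" using \<gamma> ab s0pos
          by (intro mult_nonneg_nonneg) (auto intro: mult_le_one)
        ultimately show ?thesis using gS by blast
      qed
    qed
    have vF: "vis p B F" unfolding vis_def using indep hull by blast
    have "x = (1 - v/s0) *\<^sub>R p + (v/s0) *\<^sub>R y0"
    proof -
      have gen: "(1 - k) *\<^sub>R p + k *\<^sub>R y0 = (1 - k + k*(1-s0)) *\<^sub>R p + (k* s0) *\<^sub>R b" for k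
        unfolding y0_def g_def by (rule euclidean_eqI) (simp add: inner_simps algebra_simps)
      have gk: "1 - k + k*(1-s0) = 1 - k* s0" for k :: real by (simp add: algebra_simps)
      have "1 - v/s0 + (v/s0)*(1-s0) = 1 - (v/s0)* s0" by (rule gk)
      also have "\<dots> = u" using s0pos uv by simp
      finally have "1 - v/s0 + (v/s0)*(1-s0) = u" .
      moreover note gen[of "v/s0"]
      moreover have "(v/s0)* s0 = v" using s0pos by simp
      ultimately show ?thesis using xe by simp
    qed
    moreover have "p \<in> convex hull (insert p F)" by (simp add: hull_inc)
    moreover have "y0 \<in> convex hull (insert p F)" using y0F hull_mono[of F "insert p F"] by blast
    moreover have "0 \<le> v/s0" "v/s0 \<le> 1" using uv vs0 s0pos by auto
    ultimately have "x \<in> convex hull (insert p F)" by (simp add: convexD)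
    then show ?thesis using FT vF by blast
  qed
qed




lemma newnew:
  fixes p :: "'a::euclidean_space"
  assumes vF: "vis p B F" and vG: "vis p B G" and pF: "p \<notin> F" and pG: "p \<notin> G"
    and FB: "convex hull F \<subseteq> convex hull B" and GB: "convex hull G \<subseteq> convex hull B"
    and H: "convex hull F \<inter> convex hull G = convex hull H" "H \<subseteq> F" "H \<subseteq> G"
  shows "convex hull (insert p F) \<inter> convex hull (insert p G) = convex hull (insert p H)"
proof
  show "convex hull (insert p H) \<subseteq> convex hull (insert p F) \<inter> convex hull (insert p G)"
    using H by (intro Int_greatest hull_mono) auto
next
  show "convex hull (insert p F) \<inter> convex hull (insert p G) \<subseteq> convex hull (insert p H)"
  proof
    fix x assume x: "x \<in> convex hull (insert p F) \<inter> convex hull (insert p G)"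
    have pH: "p \<in> convex hull (insert p H)" by (simp add: hull_inc)
    show "x \<in> convex hull (insert p H)"
    proof (cases "F = {} \<or> G = {}")
      case True then have "x = p" using x by auto
      then show ?thesis using pH by simp
    next
      case False
      then have Fne: "F \<noteq> {}" and Gne: "G \<noteq> {}" by auto
      obtain u v a where uv: "u \<ge> 0" "v \<ge> 0" "u + v = 1" and a: "a \<in> convex hull F"
        and xa: "x = u *\<^sub>R p + v *\<^sub>R a"
        using x convex_hull_insert[OF Fne, of p] by blast
      obtain u' v' b where uv': "u' \<ge> 0" "v' \<ge> 0" "u' + v' = 1" and b: "b \<in> convex hull G"
        and xb: "x = u' *\<^sub>R p + v' *\<^sub>R b"
        using x convex_hull_insert[OF Gne, of p] by blast
      have key: "u *\<^sub>R p + v *\<^sub>R a = u' *\<^sub>R p + v' *\<^sub>R b" using xa xb by simp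
      consider "u = u'" | "u < u'" | "u' < u" by linarith
      then show ?thesis
      proof cases
        case 1
        show ?thesis
        proof (cases "v = 0")
          case True then have "x = p" using xa uv by simp
          then show ?thesis using pH by simp
        next
          case False
          have "v *\<^sub>R a = v *\<^sub>R b" using key 1 uv uv' by simp
          then have "a = b" using False by simp
          then have "a \<in> convex hull H" using a b H by blast
          then have "a \<in> convex hull (insert p H)" using hull_mono[of H "insert p H"] by blast
          then show ?thesis unfolding xa using pH uv by (simp add: convexD)
        qed
      next
        case 2
        then have v0: "v > 0" using uv uv' by simp
        have e2: "v *\<^sub>R a = (u'-u) *\<^sub>R p + v' *\<^sub>R b" using key by (simp add: algebra_simps)
        have "a = (1/v) *\<^sub>R (v *\<^sub>R a)" using v0 by simp
        also have "\<dots> = ((u'-u)/v) *\<^sub>R p + (v'/v) *\<^sub>R b" unfolding e2 by (simp add: scaleR_add_right)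
        also have "v'/v = 1 - (u'-u)/v" using v0 uv uv' by (simp add: field_simps)
        finally have ae: "a = ((u'-u)/v) *\<^sub>R p + (1 - (u'-u)/v) *\<^sub>R b" .
        have "0 < (u'-u)/v" "(u'-u)/v \<le> 1" using 2 v0 uv uv' by (auto simp: divide_simps)
        then have False using vis_seg[OF vG pG _ b ae] a FB by blast
        then show ?thesis ..
      next
        case 3
        then have v0: "v' > 0" using uv uv' by simp
        have e2: "v' *\<^sub>R b = (u-u') *\<^sub>R p + v *\<^sub>R a" using key by (simp add: algebra_simps)
        have "b = (1/v') *\<^sub>R (v' *\<^sub>R b)" using v0 by simp
        also have "\<dots> = ((u-u')/v') *\<^sub>R p + (v/v') *\<^sub>R a" unfolding e2 by (simp add: scaleR_add_right)
        also have "v/v' = 1 - (u-u')/v'" using v0 uv uv' by (simp add: field_simps)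
        finally have be: "b = ((u-u')/v') *\<^sub>R p + (1 - (u-u')/v') *\<^sub>R a" .
        have "0 < (u-u')/v'" "(u-u')/v' \<le> 1" using 3 v0 uv uv' by (auto simp: divide_simps)
        then have False using vis_seg[OF vF pF _ a be] b GB by blast
        then show ?thesis ..
      qed
    qed
  qed
qed

lemma oldnew:
  fixes p :: "'a::euclidean_space"
  assumes vG: "vis p B G" and \<sigma>B: "convex hull \<sigma> \<subseteq> convex hull B"
  shows "convex hull \<sigma> \<inter> convex hull (insert p G) = convex hull \<sigma> \<inter> convex hull G"
  using vG \<sigma>B hull_mono[of G "insert p G"] unfolding vis_def by blast

lemma placing:
  fixes B :: "'a::euclidean_space set"
  assumes fin: "finite B" and T: "triangulation B T" and e: "{} \<in> T"
    and p: "p \<notin> convex hull B"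
  shows "triangulation (insert p B) (T \<union> {insert p F | F. F \<in> T \<and> vis p B F})"
proof -
  define N where "N = {insert p F | F. F \<in> T \<and> vis p B F}"
  have Tsimp: "\<And>\<sigma>. \<sigma> \<in> T \<Longrightarrow> \<sigma> \<subseteq> B \<and> \<not> affine_dependent \<sigma>"
    using tri_simp[OF T] by blast
  have Tface: "\<And>\<sigma> F. \<sigma> \<in> T \<Longrightarrow> F \<subseteq> \<sigma> \<Longrightarrow> F \<in> T"
    using tri_face[OF T] by blast
  have Tint: "\<And>\<sigma> \<sigma>'. \<sigma> \<in> T \<Longrightarrow> \<sigma>' \<in> T \<Longrightarrow>
      \<exists>H. H \<subseteq> \<sigma> \<and> H \<subseteq> \<sigma>' \<and> convex hull \<sigma> \<inter> convex hull \<sigma>' = convex hull H"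
    using tri_int[OF T] by blast
  have Tconv: "\<And>\<sigma>. \<sigma> \<in> T \<Longrightarrow> convex hull \<sigma> \<subseteq> convex hull B" using Tsimp hull_mono by blast
  have pB: "p \<notin> B" using p hull_subset[of B convex] by blast
  have pnot: "\<And>\<sigma>. \<sigma> \<in> T \<Longrightarrow> p \<notin> \<sigma>" using Tsimp pB by blast
  have visi: "\<And>F. vis p B F \<Longrightarrow> \<not> affine_dependent (insert p F)" unfolding vis_def by blast
  have S: "\<forall>\<sigma>\<in>T \<union> N. is_simplex_of (insert p B) \<sigma>"
    using Tsimp visi unfolding N_def is_simplex_of_def by blast
  have Fc: "\<forall>\<sigma>\<in>T \<union> N. \<forall>K. is_face \<sigma> K \<longrightarrow> K \<in> T \<union> N"
  proof (intro ballI allI impI)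
    fix \<sigma> K assume \<sigma>: "\<sigma> \<in> T \<union> N" and K: "is_face \<sigma> K"
    have Ks: "K \<subseteq> \<sigma>" using K face_subset by blast
    show "K \<in> T \<union> N"
    proof (cases "\<sigma> \<in> T")
      case True then show ?thesis using Tface Ks by blast
    next
      case False
      then obtain F where F: "F \<in> T" "vis p B F" "\<sigma> = insert p F" using \<sigma> unfolding N_def by blast
      show ?thesis
      proof (cases "p \<in> K")
        case False
        then have "K \<subseteq> F" using Ks F by blast
        then show ?thesis using Tface F by blast
      next
        case True
        define H where "H = K - {p}"
        have KH: "K = insert p H" using True H_def by blast
        have HF: "H \<subseteq> F" using Ks F H_def by blast
        have HT: "H \<in> T" using Tface F HF by blast
        have "vis p B H"
          unfolding vis_def
        proof
          show "\<not> affine_dependent (insert p H)"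
            using visi[OF F(2)] HF affine_dependent_subset[of "insert p H" "insert p F"] by blast
          show "convex hull (insert p H) \<inter> convex hull B \<subseteq> convex hull H"
          proof
            fix y assume y: "y \<in> convex hull (insert p H) \<inter> convex hull B"
            have yF: "y \<in> convex hull F"
              using y hull_mono[of "insert p H" "insert p F"] HF F(2) unfolding vis_def by blast
            show "y \<in> convex hull H"
            proof (cases "H = {}")
              case True
              then have "y = p" using y by simp
              then show ?thesis using y p by blast
            next
              case False
              then obtain u v h where uv: "u \<ge> 0" "v \<ge> 0" "u + v = 1" and h: "h \<in> convex hull H"
                and ye: "y = u *\<^sub>R p + v *\<^sub>R h"
                using y convex_hull_insert[of H p] by blast
              show ?thesis
              proof (cases "u = 0")
                case True then show ?thesis using uv h ye by simp
              next
                case False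
                have hF: "h \<in> convex hull F" using h hull_mono[OF HF] by blast
                have ye': "y = u *\<^sub>R p + (1-u) *\<^sub>R h" using ye uv by simp
                have "0 < u" "u \<le> 1" using False uv by auto
                then have False using vis_seg[OF F(2) pnot[OF F(1)] _ hF ye'] y by blast
                then show ?thesis ..
              qed
            qed
          qed
        qed
        then show ?thesis using HT KH unfolding N_def by blast
      qed
    qed
  qed
  have I: "\<forall>\<sigma>\<in>T \<union> N. \<forall>\<sigma>'\<in>T \<union> N. \<exists>F. is_face \<sigma> F \<and> is_face \<sigma>' F \<and>
             convex hull \<sigma> \<inter> convex hull \<sigma>' = convex hull F"
  proof (intro ballI)
    fix \<sigma> \<sigma>' assume s1: "\<sigma> \<in> T \<union> N" and s2: "\<sigma>' \<in> T \<union> N"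
    have ON: "\<exists>F. is_face \<sigma> F \<and> is_face (insert p G) F \<and>
             convex hull \<sigma> \<inter> convex hull (insert p G) = convex hull F"
      if o1: "\<sigma> \<in> T" and o2: "G \<in> T" and o3: "vis p B G" for \<sigma> G
    proof -
      obtain H where H: "H \<subseteq> \<sigma>" "H \<subseteq> G" "convex hull \<sigma> \<inter> convex hull G = convex hull H"
        using Tint[OF o1 o2] by blast
      show ?thesis
        using oldnew[OF o3 Tconv[OF o1]] H subset_face[of \<sigma> H] subset_face[of "insert p G" H]
          Tsimp[OF o1] visi[OF o3] by blast
    qed
    show "\<exists>F. is_face \<sigma> F \<and> is_face \<sigma>' F \<and> convex hull \<sigma> \<inter> convex hull \<sigma>' = convex hull F"
    proof (cases "\<sigma> \<in> T")
      case t1: True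
      show ?thesis
      proof (cases "\<sigma>' \<in> T")
        case True then show ?thesis using tri_int_face[OF T t1 True] by blast
      next
        case False
        then obtain G where "G \<in> T" "vis p B G" "\<sigma>' = insert p G" using s2 unfolding N_def by blast
        then show ?thesis using ON t1 by blast
      qed
    next
      case f1: False
      then obtain F where F: "F \<in> T" "vis p B F" "\<sigma> = insert p F" using s1 unfolding N_def by blast
      show ?thesis
      proof (cases "\<sigma>' \<in> T")
        case True
        then show ?thesis using ON[OF True F(1,2)] F(3) by (metis inf_commute)
      next
        case False
        then obtain G where G: "G \<in> T" "vis p B G" "\<sigma>' = insert p G" using s2 unfolding N_def by blast
        obtain H where H: "H \<subseteq> F" "H \<subseteq> G" "convex hull F \<inter> convex hull G = convex hull H"
          using Tint[OF F(1) G(1)] by blast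
        have eq: "convex hull \<sigma> \<inter> convex hull \<sigma>' = convex hull (insert p H)"
          unfolding F(3) G(3)
          using newnew[OF F(2) G(2) pnot[OF F(1)] pnot[OF G(1)] Tconv[OF F(1)] Tconv[OF G(1)] H(3,1,2)] .
        have "is_face \<sigma> (insert p H)" unfolding F(3) using H visi[OF F(2)] by (intro subset_face) auto
        moreover have "is_face \<sigma>' (insert p H)" unfolding G(3) using H visi[OF G(2)] by (intro subset_face) auto
        ultimately show ?thesis using eq by blast
      qed
    qed
  qed
  have U: "(\<Union>\<sigma>\<in>T \<union> N. convex hull \<sigma>) = convex hull (insert p B)"
  proof
    show "(\<Union>\<sigma>\<in>T \<union> N. convex hull \<sigma>) \<subseteq> convex hull (insert p B)"
    proof (intro UN_least)
      fix \<sigma> assume "\<sigma> \<in> T \<union> N"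
      then have "\<sigma> \<subseteq> insert p B" using Tsimp unfolding N_def by blast
      then show "convex hull \<sigma> \<subseteq> convex hull (insert p B)" by (rule hull_mono)
    qed
    show "convex hull (insert p B) \<subseteq> (\<Union>\<sigma>\<in>T \<union> N. convex hull \<sigma>)"
    proof
      fix x assume "x \<in> convex hull (insert p B)"
      then obtain F where "F \<in> T" "x \<in> convex hull F \<or> (vis p B F \<and> x \<in> convex hull (insert p F))"
        using cover[OF fin T e p] by blast
      then show "x \<in> (\<Union>\<sigma>\<in>T \<union> N. convex hull \<sigma>)" unfolding N_def by blast
    qed
  qed
  show ?thesis unfolding triangulation_def N_def[symmetric] using S Fc I U by blast
qed




lemma extend_all:
  fixes A :: "'a::euclidean_space set"
  assumes finA: "finite A" and vert: "\<And>p. p \<in> A \<Longrightarrow> p \<notin> convex hull (A - {p})"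
  shows "B \<subseteq> A \<Longrightarrow> triangulation B T \<Longrightarrow> \<exists>T'. triangulation A T' \<and> T \<subseteq> T'"
proof (induction "card (A - B)" arbitrary: B T)
  case 0
  then have "A - B = {}" using finA by simp
  then have "B = A" using 0 by blast
  then show ?case using 0 by blast
next
  case (Suc n)
  then have "A - B \<noteq> {}" by auto
  then obtain p where p: "p \<in> A" "p \<notin> B" by blast
  have finB: "finite B" using Suc.prems(1) finA finite_subset by blast
  have "convex hull B \<subseteq> convex hull (A - {p})" using Suc.prems(1) p by (intro hull_mono) blast
  then have pc: "p \<notin> convex hull B" using vert[OF p(1)] by blast
  have T1: "triangulation B (insert {} T)" using tri_insert_empty[OF Suc.prems(2)] .
  have T2: "triangulation (insert p B) (insert {} T \<union> {insert p F | F. F \<in> insert {} T \<and> vis p B F})"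
    using placing[OF finB T1 _ pc] by blast
  have "A - insert p B = (A - B) - {p}" by blast
  then have "n = card (A - insert p B)" using Suc.hyps(2) p finA by simp
  moreover have "insert p B \<subseteq> A" using Suc.prems(1) p by blast
  ultimately obtain T' where "triangulation A T'"
    "insert {} T \<union> {insert p F | F. F \<in> insert {} T \<and> vis p B F} \<subseteq> T'"
    using Suc.hyps(1)[OF _ _ T2] by blast
  then show ?case by blast
qed

lemma prodA_fin: "finite (prodA :: ((real^5) \<times> (real^('n::finite))) set)"
proof -
  have eq: "(prodA :: ((real^5) \<times> (real^'n)) set) = (\<lambda>(i,f). (axis i 1, axis f 1)) ` (UNIV :: (5 \<times> 'n) set)"
    unfolding prodA_def by auto
  have "finite ((\<lambda>(i,f). (axis i 1 :: real^5, axis f 1 :: real^'n)) ` (UNIV :: (5 \<times> 'n) set))"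
    by (rule finite_imageI) simp
  then show ?thesis unfolding eq .
qed

lemma prodA_vert:
  assumes p: "p \<in> (prodA :: ((real^5) \<times> (real^('n::finite))) set)"
  shows "p \<notin> convex hull (prodA - {p})"
proof
  obtain i f where pe: "p = (axis i 1, axis f 1)" using p unfolding prodA_def by blast
  have le: "p \<bullet> q \<le> 1" if qA: "q \<in> prodA - {p}" for q
  proof -
    obtain j g where qe: "q = (axis j 1, axis g 1)" using qA unfolding prodA_def by blast
    have "i \<noteq> j \<or> f \<noteq> g" using qA pe qe by auto
    then show ?thesis unfolding pe qe by (auto simp: inner_axis_axis)
  qed
  have "convex hull (prodA - {p}) \<subseteq> {x. p \<bullet> x \<le> 1}"
    using le by (intro hull_minimal) (auto simp: convex_halfspace_le)
  moreover have "p \<bullet> p = 2" unfolding pe by (simp add: inner_axis_axis)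
  moreover assume "p \<in> convex hull (prodA - {p})"
  ultimately show False by auto
qed

theorem proposition5p7:
  fixes lab :: "'n::finite \<Rightarrow> 5 set"
    and T :: "((real^5) \<times> (real^'n)) set set"
  assumes "\<forall>f. card (lab f) = 2"
    and "triangulation (perm_Pi lab) T"
  shows "\<exists>T'. triangulation (prodA :: ((real^5) \<times> (real^'n)) set) T' \<and> T \<subseteq> T'"
proof -
  have sub: "perm_Pi lab \<subseteq> (prodA :: ((real^5) \<times> (real^'n)) set)"
    unfolding perm_Pi_def prodA_def by blast
  show ?thesis
    using extend_all[OF prodA_fin prodA_vert sub assms(2)] by blast
qed


end
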